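(* Let $L$ be a $c$-lattice and $S$ a multiplicatively closed subset of $L$ (with $1\in S$, $0\notin S$), and let $p\in L$. If $q_1,\dots,q_n$ are $S$-$p$-primary elements of $L$, then $\bigwedge_{i=1}^n q_i$ is an $S$-$p$-primary element of $L$.
   Context: A multiplicative lattice is a complete lattice with a commutative, associative multiplication distributing over arbitrary joins, with $1$ as identity; $L_*$ is the set of compact elements. A $c$-lattice is a compactly generated multiplicative lattice with $1$ compact in which the product of two compact elements is compact. A multiplicatively closed subset is a nonempty $S\subseteq L_*$ closed under multiplication. $\sqrt a=\bigvee\{x\in L_*\mid x^n\le a\text{ for some }n\in\mathbb{Z}^+\}$. A proper element $p$ with $t\not\le p$ for all $t\in S$ is $S$-prime if there is $s\in S$ such that $ab\le p$ implies $sa\le p$ or $sb\le p$ for all $a,b$. A proper element $q$ with $t\not\le q$ for all $t\in S$ is $S$-primary if there is $s\in S$ such that $cd\le q$ implies $sc\le q$ or $sd\le\sqrt q$ for all $c,d\in L$; it is $S$-$p$-primary if moreover $\sqrt q=p$ and $p$ is $S$-prime. *)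

theory Defs
  imports Main
begin

text \<open>A multiplicative lattice: a complete lattice 'a with a multiplication m that is
commutative, associative, distributes over arbitrary joins, and has the top element
(the element 1 of the paper) as identity.\<close>

definition mult_lattice :: "('a::complete_lattice \<Rightarrow> 'a \<Rightarrow> 'a) \<Rightarrow> bool" where
  "mult_lattice m \<longleftrightarrow>
     (\<forall>a b. m a b = m b a) \<and>
     (\<forall>a b c. m (m a b) c = m a (m b c)) \<and>
     (\<forall>a X. m a (Sup X) = Sup ((\<lambda>x. m a x) ` X)) \<and>
     (\<forall>a. m top a = a)"

definition compact_el :: "'a::complete_lattice \<Rightarrow> bool" where
  "compact_el x \<longleftrightarrow> (\<forall>X. x \<le> Sup X \<longrightarrow> (\<exists>F. finite F \<and> F \<subseteq> X \<and> x \<le> Sup F))"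

definition c_lattice where
  "c_lattice (m :: 'a::complete_lattice \<Rightarrow> 'a \<Rightarrow> 'a) \<longleftrightarrow> mult_lattice m \<and>
     (\<forall>a::'a. a = Sup {x. compact_el x \<and> x \<le> a}) \<and>
     compact_el (top :: 'a) \<and>
     (\<forall>x y. compact_el x \<longrightarrow> compact_el y \<longrightarrow> compact_el (m x y))"

definition mult_closed :: "('a::complete_lattice \<Rightarrow> 'a \<Rightarrow> 'a) \<Rightarrow> 'a set \<Rightarrow> bool" where
  "mult_closed m S \<longleftrightarrow> S \<noteq> {} \<and> (\<forall>s\<in>S. compact_el s) \<and> (\<forall>s\<in>S. \<forall>t\<in>S. m s t \<in> S)"

primrec mpow :: "('a::complete_lattice \<Rightarrow> 'a \<Rightarrow> 'a) \<Rightarrow> 'a \<Rightarrow> nat \<Rightarrow> 'a" where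
  "mpow m x 0 = top"
| "mpow m x (Suc n) = m x (mpow m x n)"

definition lrad :: "('a::complete_lattice \<Rightarrow> 'a \<Rightarrow> 'a) \<Rightarrow> 'a \<Rightarrow> 'a" where
  "lrad m a = Sup {x. compact_el x \<and> (\<exists>n::nat. n \<ge> 1 \<and> mpow m x n \<le> a)}"

definition S_prime :: "('a::complete_lattice \<Rightarrow> 'a \<Rightarrow> 'a) \<Rightarrow> 'a set \<Rightarrow> 'a \<Rightarrow> bool" where
  "S_prime m S p \<longleftrightarrow> p \<noteq> top \<and> (\<forall>t\<in>S. \<not> t \<le> p) \<and>
     (\<exists>s\<in>S. \<forall>a b. m a b \<le> p \<longrightarrow> m s a \<le> p \<or> m s b \<le> p)"

definition S_primary :: "('a::complete_lattice \<Rightarrow> 'a \<Rightarrow> 'a) \<Rightarrow> 'a set \<Rightarrow> 'a \<Rightarrow> bool" where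
  "S_primary m S q \<longleftrightarrow> q \<noteq> top \<and> (\<forall>t\<in>S. \<not> t \<le> q) \<and>
     (\<exists>s\<in>S. \<forall>c d. m c d \<le> q \<longrightarrow> m s c \<le> q \<or> m s d \<le> lrad m q)"

definition S_p_primary :: "('a::complete_lattice \<Rightarrow> 'a \<Rightarrow> 'a) \<Rightarrow> 'a set \<Rightarrow> 'a \<Rightarrow> 'a \<Rightarrow> bool" where
  "S_p_primary m S p q \<longleftrightarrow> S_primary m S q \<and> lrad m q = p \<and> S_prime m S p"

end

theory Submission
  imports Defs
begin

lemma ml_mono:
  assumes "mult_lattice m" "a \<le> b"
  shows "m c a \<le> m c b"
proof -
  have "m c b = m c (Sup {a, b})" using assms(2) by (simp add: sup_absorb2)
  also have "\<dots> = Sup {m c a, m c b}"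
  proof -
    have d: "\<And>a X. m a (Sup X) = Sup (m a ` X)" using assms(1) unfolding mult_lattice_def by blast
    show ?thesis by (simp only: d image_insert image_empty)
  qed
  finally show ?thesis by (metis Sup_upper insertI1)
qed

lemma ml_comm: "mult_lattice m \<Longrightarrow> m a b = m b a"
  unfolding mult_lattice_def by blast

lemma ml_assoc: "mult_lattice m \<Longrightarrow> m (m a b) c = m a (m b c)"
  unfolding mult_lattice_def by blast

lemma ml_le_right:
  assumes "mult_lattice m"
  shows "m a b \<le> b"
proof -
  have "m a b \<le> m b top" using ml_mono[OF assms, of a top b] ml_comm[OF assms] by simp
  also have "\<dots> = b" using assms ml_comm[OF assms] unfolding mult_lattice_def by metis
  finally show ?thesis .
qed

lemma mpow_anti:
  assumes "mult_lattice m" "k \<le> N"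
  shows "mpow m x N \<le> mpow m x k"
  using assms(2)
proof (induction N)
  case 0 then show ?case by simp
next
  case (Suc N)
  show ?case
  proof (cases "k = Suc N")
    case False
    then have "k \<le> N" using Suc by simp
    then have "mpow m x N \<le> mpow m x k" using Suc by simp
    moreover have "mpow m x (Suc N) \<le> mpow m x N" using ml_le_right[OF assms(1)] by simp
    ultimately show ?thesis by order
  qed simp
qed

lemma prod_exists:
  assumes "mult_lattice m" "finite I" "\<forall>i\<in>I. f i \<in> S" "top \<in> S"
    "\<forall>s\<in>S. \<forall>t\<in>S. m s t \<in> S"
  shows "\<exists>s\<in>S. \<forall>i\<in>I. \<forall>x. m s x \<le> m (f i) x"
  using assms(2,3)
proof (induction I rule: finite_induct)
  case empty then show ?case using assms(4) by blast
next
  case (insert a I)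
  then obtain s where s: "s \<in> S" "\<forall>i\<in>I. \<forall>x. m s x \<le> m (f i) x" by auto
  have fa: "f a \<in> S" using insert by auto
  show ?case
  proof (intro bexI ballI allI)
    show "m (f a) s \<in> S" using fa s assms(5) by blast
    fix i x assume "i \<in> insert a I"
    then show "m (m (f a) s) x \<le> m (f i) x"
    proof
      assume "i = a"
      have "m (m (f a) s) x = m s (m (f a) x)"
        using ml_comm[OF assms(1)] ml_assoc[OF assms(1)] by metis
      also have "\<dots> \<le> m (f a) x" by (rule ml_le_right[OF assms(1)])
      finally show ?thesis using \<open>i = a\<close> by simp
    next
      assume "i \<in> I"
      have "m (m (f a) s) x = m (f a) (m s x)" using ml_assoc[OF assms(1)] by metis
      also have "\<dots> \<le> m s x" by (rule ml_le_right[OF assms(1)])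
      also have "\<dots> \<le> m (f i) x" using s \<open>i \<in> I\<close> by blast
      finally show ?thesis .
    qed
  qed
qed

lemma ml_mono2:
  assumes "mult_lattice m" "a \<le> b" "c \<le> d"
  shows "m a c \<le> m b d"
proof -
  have "m a c \<le> m a d" by (rule ml_mono[OF assms(1,3)])
  also have "\<dots> = m d a" by (rule ml_comm[OF assms(1)])
  also have "\<dots> \<le> m d b" by (rule ml_mono[OF assms(1,2)])
  also have "\<dots> = m b d" by (rule ml_comm[OF assms(1)])
  finally show ?thesis .
qed

lemma ml_le_left:
  assumes "mult_lattice m"
  shows "m a b \<le> a"
  using ml_le_right[OF assms, of b a] ml_comm[OF assms] by metis

lemma ml_Sup_le:
  assumes "mult_lattice m"
  shows "m x (Sup T) \<le> b \<longleftrightarrow> (\<forall>t\<in>T. m x t \<le> b)"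
  using assms unfolding mult_lattice_def by (simp add: SUP_le_iff)

lemma mpow_mono_base:
  assumes "mult_lattice m" "x \<le> y"
  shows "mpow m x k \<le> mpow m y k"
  by (induction k) (auto intro: ml_mono2[OF assms(1)] assms(2))

lemma mpow_sup:
  assumes ml: "mult_lattice m"
  shows "mpow m (sup u v) N \<le> Sup {m (mpow m u r) (mpow m v s) | r s. r + s = N}"
proof (induction N)
  case 0
  have mem: "m (mpow m u 0) (mpow m v 0) \<in> {m (mpow m u r) (mpow m v s) | r s. r + s = 0}" by blast
  have eq: "m (mpow m u 0) (mpow m v 0) = top" using ml unfolding mult_lattice_def mpow.simps(1) by blast
  have "top \<le> Sup {m (mpow m u r) (mpow m v s) | r s. r + s = 0}" using Sup_upper[OF mem] unfolding eq .
  then show ?case by simp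
next
  case (Suc N)
  let ?T = "{m (mpow m u r) (mpow m v s) | r s. r + s = N}"
  let ?T' = "{m (mpow m u r) (mpow m v s) | r s. r + s = Suc N}"
  have "mpow m (sup u v) (Suc N) \<le> m (sup u v) (Sup ?T)"
    unfolding mpow.simps(2) by (rule ml_mono[OF ml Suc.IH])
  also have "\<dots> \<le> Sup ?T'"
    unfolding ml_Sup_le[OF ml]
  proof
    fix t assume "t \<in> ?T"
    then obtain r s where t: "t = m (mpow m u r) (mpow m v s)" "r + s = N" by blast
    have d: "\<And>a X. m a (Sup X) = Sup (m a ` X)" using ml unfolding mult_lattice_def by blast
    have "m (sup u v) t = m t (Sup {u, v})" using ml_comm[OF ml, of "sup u v" t] by simp
    also have "\<dots> = sup (m t u) (m t v)" 
      using d[of t "{u, v}"] by simp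
    also have "m t u = m (mpow m u (Suc r)) (mpow m v s)"
    proof -
      have "m t u = m u t" by (rule ml_comm[OF ml])
      also have "\<dots> = m (m u (mpow m u r)) (mpow m v s)" unfolding t(1) by (rule ml_assoc[OF ml, symmetric])
      finally show ?thesis by simp
    qed
    also have "m t v = m (mpow m u r) (mpow m v (Suc s))"
    proof -
      have e2: "t = m (mpow m v s) (mpow m u r)" unfolding t(1) by (rule ml_comm[OF ml])
      have "m t v = m v (m (mpow m v s) (mpow m u r))" unfolding e2 by (rule ml_comm[OF ml])
      also have "\<dots> = m (m v (mpow m v s)) (mpow m u r)" by (rule ml_assoc[OF ml, symmetric])
      also have "\<dots> = m (mpow m u r) (m v (mpow m v s))" by (rule ml_comm[OF ml])
      finally show ?thesis by simp
    qed
    finally have eq: "m (sup u v) t = sup (m (mpow m u (Suc r)) (mpow m v s)) (m (mpow m u r) (mpow m v (Suc s)))" .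
    have "Suc r + s = Suc N" "r + Suc s = Suc N" using t by simp_all
    then have "m (mpow m u (Suc r)) (mpow m v s) \<in> ?T'" "m (mpow m u r) (mpow m v (Suc s)) \<in> ?T'" by blast+
    then show "m (sup u v) t \<le> Sup ?T'" unfolding eq by (simp add: Sup_upper)
  qed
  finally show ?case .
qed

lemma sup_pow:
  assumes ml: "mult_lattice m" and i: "i \<ge> 1" "mpow m u i \<le> a" and j: "j \<ge> 1" "mpow m v j \<le> a"
  shows "\<exists>k\<ge>1. mpow m (sup u v) k \<le> a"
proof (intro exI conjI)
  show "1 \<le> i + j" using i by simp
  have "Sup {m (mpow m u r) (mpow m v s) | r s. r + s = i + j} \<le> a"
  proof (rule Sup_least, safe)
    fix r s assume rs: "r + s = i + j"
    show "m (mpow m u r) (mpow m v s) \<le> a"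
    proof (cases "i \<le> r")
      case True
      have "m (mpow m u r) (mpow m v s) \<le> mpow m u r" by (rule ml_le_left[OF ml])
      also have "\<dots> \<le> mpow m u i" by (rule mpow_anti[OF ml True])
      finally show ?thesis using i by order
    next
      case False
      then have "j \<le> s" using rs by simp
      have "m (mpow m u r) (mpow m v s) \<le> mpow m v s" by (rule ml_le_right[OF ml])
      also have "\<dots> \<le> mpow m v j" by (rule mpow_anti[OF ml \<open>j \<le> s\<close>])
      finally show ?thesis using j by order
    qed
  qed
  then show "mpow m (sup u v) (i + j) \<le> a" using mpow_sup[OF ml, of u v "i+j"] by order
qed

lemma finite_sup_pow:
  assumes ml: "mult_lattice m" and "finite F" "F \<subseteq> {y. \<exists>k\<ge>1. mpow m y k \<le> a}"
  shows "\<exists>k\<ge>1. mpow m (Sup F) k \<le> a"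
  using assms(2,3)
proof (induction F rule: finite_induct)
  case empty
  have d: "\<And>a X. m a (Sup X) = Sup (m a ` X)" using ml unfolding mult_lattice_def by blast
  have "m top bot = bot" using d[of top "{}"] by simp
  then have "m bot top = bot" using ml_comm[OF ml] by metis
  then have "mpow m (Sup {}) 1 \<le> a" by simp
  then show ?case by blast
next
  case (insert y F)
  then obtain k where k: "k \<ge> 1" "mpow m (Sup F) k \<le> a" by auto
  obtain j where j: "j \<ge> 1" "mpow m y j \<le> a" using insert by auto
  show ?case using sup_pow[OF ml j k] by simp
qed

lemma rad_pow:
  assumes ml: "mult_lattice m" and cx: "compact_el x" and x: "x \<le> lrad m a"
  shows "\<exists>k\<ge>1. mpow m x k \<le> a"
proof -
  obtain F where F: "finite F" "F \<subseteq> {x. compact_el x \<and> (\<exists>n::nat. n \<ge> 1 \<and> mpow m x n \<le> a)}"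
    "x \<le> Sup F"
  proof -
    have "\<forall>X. x \<le> Sup X \<longrightarrow> (\<exists>F. finite F \<and> F \<subseteq> X \<and> x \<le> Sup F)"
      using cx unfolding compact_el_def .
    then have "x \<le> Sup {x. compact_el x \<and> (\<exists>n::nat. n \<ge> 1 \<and> mpow m x n \<le> a)} \<Longrightarrow>
      (\<exists>F. finite F \<and> F \<subseteq> {x. compact_el x \<and> (\<exists>n::nat. n \<ge> 1 \<and> mpow m x n \<le> a)} \<and> x \<le> Sup F)"
      by (rule allE) (erule mp)
    then show ?thesis using x unfolding lrad_def using that by blast
  qed
  then have "F \<subseteq> {y. \<exists>k\<ge>1. mpow m y k \<le> a}" by blast
  from finite_sup_pow[OF ml F(1) this] obtain k where "k \<ge> 1" "mpow m (Sup F) k \<le> a" by blast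
  moreover have "mpow m x k \<le> mpow m (Sup F) k" by (rule mpow_mono_base[OF ml F(3)])
  ultimately show ?thesis by (meson order_trans)
qed

theorem mainTheorem8:
  fixes m :: "'a::complete_lattice \<Rightarrow> 'a \<Rightarrow> 'a"
    and S :: "'a set" and p :: 'a and q :: "nat \<Rightarrow> 'a" and n :: nat
  assumes "c_lattice m"
    and "mult_closed m S"
    and "top \<in> S" and "bot \<notin> S"
    and "n \<ge> 1"
    and "\<forall>i\<in>{1..n}. S_p_primary m S p (q i)"
  shows "S_p_primary m S p (INF i\<in>{1..n}. q i)"
proof -
  define Q where "Q = (INF i\<in>{1..n}. q i)"
  have ml: "mult_lattice m" using assms(1) unfolding c_lattice_def by blast
  have one: "1 \<in> {1..n}" using assms(5) by simp
  have Qle: "\<And>i. i \<in> {1..n} \<Longrightarrow> Q \<le> q i" unfolding Q_def by (rule INF_lower)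
  have qi: "\<And>i. i \<in> {1..n} \<Longrightarrow> S_primary m S (q i) \<and> lrad m (q i) = p \<and> S_prime m S p"
    using assms(6) unfolding S_p_primary_def by blast
  have pr: "S_prime m S p" using qi[OF one] by blast
  have ntop: "Q \<noteq> top" using Qle[OF one] qi[OF one] unfolding S_primary_def
    by (metis top.extremum_uniqueI)
  have nS: "\<forall>t\<in>S. \<not> t \<le> Q" using Qle[OF one] qi[OF one] unfolding S_primary_def
    by (meson order_trans)
  have rad: "lrad m Q = p"
  proof (rule antisym)
    have "lrad m Q \<le> lrad m (q 1)" unfolding lrad_def
      by (rule Sup_subset_mono) (use Qle[OF one] order_trans in blast)
    then show "lrad m Q \<le> p" using qi[OF one] by simp
    have "lrad m (q 1) \<le> lrad m Q" unfolding lrad_def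
    proof (rule Sup_subset_mono, safe)
      fix x k assume cx: "compact_el x" and k: "1 \<le> k" "mpow m x k \<le> q 1"
      have x1: "x \<le> lrad m (q 1)" using cx k unfolding lrad_def by (blast intro: Sup_upper)
      have "\<forall>i\<in>{1..n}. \<exists>j. j \<ge> 1 \<and> mpow m x j \<le> q i"
      proof
        fix i assume i: "i \<in> {1..n}"
        have "x \<le> lrad m (q i)" using qi[OF i] qi[OF one] x1 by simp
        then show "\<exists>j. j \<ge> 1 \<and> mpow m x j \<le> q i" using rad_pow[OF ml cx] by blast
      qed
      then obtain f where f: "\<forall>i\<in>{1..n}. f i \<ge> 1 \<and> mpow m x (f i) \<le> q i" by metis
      define N where "N = Max (f ` {1..n})"
      have fN: "f i \<le> N" if "i \<in> {1..n}" for i unfolding N_def using that by simp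
      show "\<exists>j\<ge>1. mpow m x j \<le> Q"
      proof (intro exI conjI)
        show "1 \<le> N" using fN[OF one] f one by force
        show "mpow m x N \<le> Q" unfolding Q_def
        proof (rule INF_greatest)
          fix i assume i: "i \<in> {1..n}"
          show "mpow m x N \<le> q i" using mpow_anti[OF ml fN[OF i], of x] f i by (meson order_trans)
        qed
      qed
    qed
    then show "p \<le> lrad m Q" using qi[OF one] by simp
  qed
  have "\<forall>i\<in>{1..n}. \<exists>s\<in>S. \<forall>c d. m c d \<le> q i \<longrightarrow> m s c \<le> q i \<or> m s d \<le> p"
    using qi unfolding S_primary_def by metis
  then obtain f where f: "\<forall>i\<in>{1..n}. f i \<in> S \<and> (\<forall>c d. m c d \<le> q i \<longrightarrow> m (f i) c \<le> q i \<or> m (f i) d \<le> p)"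
    by metis
  obtain s where s: "s \<in> S" "\<forall>i\<in>{1..n}. \<forall>x. m s x \<le> m (f i) x"
    using prod_exists[OF ml _ _ assms(3), of "{1..n}" f] f assms(2) unfolding mult_closed_def by auto
  have "\<forall>c d. m c d \<le> Q \<longrightarrow> m s c \<le> Q \<or> m s d \<le> lrad m Q"
  proof (intro allI impI)
    fix c d assume cd: "m c d \<le> Q"
    show "m s c \<le> Q \<or> m s d \<le> lrad m Q"
    proof (cases "\<exists>i\<in>{1..n}. m (f i) d \<le> p")
      case True
      then obtain i where "i \<in> {1..n}" "m (f i) d \<le> p" by blast
      then have "m s d \<le> p" using s by (meson order_trans)
      then show ?thesis using rad by simp
    next
      case False
      have "m s c \<le> Q" unfolding Q_def
      proof (rule INF_greatest)
        fix i assume i: "i \<in> {1..n}"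
        have "m c d \<le> q i" using cd Qle[OF i] by order
        then have "m (f i) c \<le> q i" using f i False by blast
        then show "m s c \<le> q i" using s i by (meson order_trans)
      qed
      then show ?thesis by simp
    qed
  qed
  then have "S_primary m S Q" unfolding S_primary_def using ntop nS s by blast
  then show ?thesis unfolding S_p_primary_def Q_def[symmetric] using rad pr by blast
qed

end
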